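(* Let $\chi$ be the solution of the cell problem. (a) If $0<c_\psi\le\psi\le C_\psi$, then $\|\chi\|_{L^\infty(N,p)}\le\frac p2\frac{C_\psi}{c_\psi}$. (b) If in addition $\|D_X\psi\|_{L^\infty(N,p)}\le C'_\psi$, then \[ \max_{1\le i\le N}|D_X\psi^0(X_i)|\le\frac{C_\psi}{c_\psi}C'_\psi,\qquad \|D_X\chi\|_{L^\infty(N,p)}\le p\frac{C'_\psi}{c_\psi}. \]
   Context: Let $\epsilon>0$ and $N,p$ positive integers; $X_i=\epsilon i$, $Y_j=j$. Two-scale functions $g:\epsilon\mathbb Z\times\mathbb Z\to\mathbb R$ satisfy $g(X_{i+N},Y_j)=g(X_i,Y_j)=g(X_i,Y_{j+p})$; $D_Xg(X_i,Y_j)=(g(X_{i+1},Y_j)-g(X_i,Y_j))/\epsilon$, $D_Yg(X_i,Y_j)=g(X_i,Y_{j+1})-g(X_i,Y_j)$, $\langle g\rangle_Y(X_i)=\frac1p\sum_{j=1}^pg(X_i,Y_j)$, $\|g\|_{L^\infty(N,p)}=\max_{1\le i\le N,1\le j\le p}|g(X_i,Y_j)|$. $\psi$ is a two-scale function with $0<c_\psi\le\psi(X_i,Y_j)\le C_\psi$ for all $i,j$. The homogenized tensor is $\psi^0(X_i)=\langle1/\psi(X_i,\cdot)\rangle_Y^{-1}$, with $D_X\psi^0(X_i)=(\psi^0(X_{i+1})-\psi^0(X_i))/\epsilon$. The cell solution $\chi$ is the two-scale function with $\langle\chi(X_i,\cdot)\rangle_Y=0$ and $-D_Y(\psi D_Y\chi)=D_Y\psi$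 at every $(X_i,Y_j)$. *)

theory Defs
  imports Complex_Main
begin

text \<open>Two-scale functions are represented by their values on the index lattice:
  g i j stands for g(X_i, Y_j) with X_i = eps*i, Y_j = j, i, j integers.\<close>

definition two_scale :: "nat \<Rightarrow> nat \<Rightarrow> (int \<Rightarrow> int \<Rightarrow> real) \<Rightarrow> bool" where
  "two_scale N p g \<longleftrightarrow> (\<forall>i j. g (i + int N) j = g i j \<and> g i (j + int p) = g i j)"

definition DX :: "real \<Rightarrow> (int \<Rightarrow> int \<Rightarrow> real) \<Rightarrow> int \<Rightarrow> int \<Rightarrow> real" where
  "DX eps g i j = (g (i + 1) j - g i j) / eps"

definition DY :: "(int \<Rightarrow> int \<Rightarrow> real) \<Rightarrow> int \<Rightarrow> int \<Rightarrow> real" where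
  "DY g i j = g i (j + 1) - g i j"

definition meanY :: "nat \<Rightarrow> (int \<Rightarrow> int \<Rightarrow> real) \<Rightarrow> int \<Rightarrow> real" where
  "meanY p g i = (1 / real p) * (\<Sum>j = 1..int p. g i j)"

definition Linf :: "nat \<Rightarrow> nat \<Rightarrow> (int \<Rightarrow> int \<Rightarrow> real) \<Rightarrow> real" where
  "Linf N p g = Max {\<bar>g i j\<bar> | i j. i \<in> {1..int N} \<and> j \<in> {1..int p}}"

definition psi0 :: "nat \<Rightarrow> (int \<Rightarrow> int \<Rightarrow> real) \<Rightarrow> int \<Rightarrow> real" where
  "psi0 p psi i = inverse (meanY p (\<lambda>i' j. 1 / psi i' j) i)"

definition DX1 :: "real \<Rightarrow> (int \<Rightarrow> real) \<Rightarrow> int \<Rightarrow> real" where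
  "DX1 eps f i = (f (i + 1) - f i) / eps"

definition cell_solution :: "nat \<Rightarrow> nat \<Rightarrow> (int \<Rightarrow> int \<Rightarrow> real) \<Rightarrow> (int \<Rightarrow> int \<Rightarrow> real) \<Rightarrow> bool" where
  "cell_solution N p psi chi \<longleftrightarrow> two_scale N p chi \<and> (\<forall>i. meanY p chi i = 0) \<and>
     (\<forall>i j. - DY (\<lambda>i' j'. psi i' j' * DY chi i' j') i j = DY psi i j)"

end

theory Submission imports Defs begin

lemma telesc: "a \<le> b \<Longrightarrow> (\<Sum>m\<in>{a..<b}. f (m+1) - f m) = f b - (f (a::int) :: real)"
proof (induction b rule: int_ge_induct)
  case base then show ?case by simp
next
  case (step i)
  have "{a..<i+1} = insert i {a..<i}" using step by auto
  then show ?case using step by simp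
qed

lemma int_all: fixes j :: int assumes h: "\<And>j. F (j+1) = (F j::real)" shows "F j = F 0"
proof (induction j rule: int_induct[where k=0])
  case base then show ?case by simp
next
  case (step1 i) then show ?case using h by metis
next
  case (step2 i) then show ?case using h[of "i-1"] by simp
qed

lemma key:
  fixes f :: "int \<Rightarrow> real" and p :: nat
  assumes p: "p > 0" and per: "f (int p + 1) = f 1" and s0: "(\<Sum>j=1..int p. f j) = 0"
    and j: "j \<in> {1..int p}"
  shows "\<bar>f j\<bar> \<le> (\<Sum>m=1..int p. \<bar>f (m+1) - f m\<bar>) / 2"
proof -
  define T where "T = (\<Sum>m=1..int p. \<bar>f (m+1) - f m\<bar>)"
  have pair: "2 * \<bar>f k - f j\<bar> \<le> T" if jk: "1 \<le> j" "j \<le> k" "k \<le> int p" for j k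
  proof -
    have e1: "f k - f j = (\<Sum>m\<in>{j..<k}. f (m+1) - f m)" using telesc[of j k f] jk by simp
    have e2: "f j - f k = (\<Sum>m\<in>{k..<int p+1}. f (m+1) - f m) + (\<Sum>m\<in>{1..<j}. f (m+1) - f m)"
      using telesc[of k "int p+1" f] telesc[of 1 j f] jk per by simp
    have a1: "\<bar>f k - f j\<bar> \<le> (\<Sum>m\<in>{j..<k}. \<bar>f (m+1) - f m\<bar>)"
      unfolding e1 by (rule sum_abs)
    have a2: "\<bar>f j - f k\<bar> \<le> (\<Sum>m\<in>{k..<int p+1}. \<bar>f (m+1) - f m\<bar>) + (\<Sum>m\<in>{1..<j}. \<bar>f (m+1) - f m\<bar>)"
      unfolding e2 by (rule order.trans[OF abs_triangle_ineq add_mono[OF sum_abs sum_abs]])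
    have u: "{1..int p} = ({1..<j} \<union> {j..<k}) \<union> {k..<int p+1}" using jk by auto
    have "T = (\<Sum>m\<in>{1..<j}. \<bar>f (m+1) - f m\<bar>) + (\<Sum>m\<in>{j..<k}. \<bar>f (m+1) - f m\<bar>) + (\<Sum>m\<in>{k..<int p+1}. \<bar>f (m+1) - f m\<bar>)"
    proof -
      let ?g = "\<lambda>m. \<bar>f (m + 1) - f m\<bar>"
      have d1: "sum ?g ({1..<j} \<union> {j..<k}) = sum ?g {1..<j} + sum ?g {j..<k}"
        by (rule sum.union_disjoint) auto
      have d2: "sum ?g (({1..<j} \<union> {j..<k}) \<union> {k..<int p+1}) = sum ?g ({1..<j} \<union> {j..<k}) + sum ?g {k..<int p+1}"
        using jk by (intro sum.union_disjoint) auto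
      show ?thesis unfolding T_def u d2 d1 ..
    qed
    then show ?thesis using a1 a2 by (simp add: abs_minus_commute)
  qed
  have pw: "\<bar>f j - f k\<bar> \<le> T / 2" if "k \<in> {1..int p}" for k
  proof (cases "j \<le> k")
    case True then show ?thesis using pair[of j k] j that by (simp add: abs_minus_commute)
  next
    case False then show ?thesis using pair[of k j] j that by simp
  qed
  have cp: "card {1..int p} = p" by simp
  have "(\<Sum>k=1..int p. f j - f k) = real p * f j"
    using s0 by (simp add: sum_subtractf)
  then have "f j = (\<Sum>k=1..int p. f j - f k) / real p" using p by simp
  then have "\<bar>f j\<bar> = \<bar>\<Sum>k=1..int p. f j - f k\<bar> / real p" by (metis abs_divide abs_of_nat)
  also have "\<dots> \<le> (\<Sum>k=1..int p. \<bar>f j - f k\<bar>) / real p"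
    by (rule divide_right_mono[OF sum_abs]) simp
  also have "\<dots> \<le> (\<Sum>k=1..int p. T/2) / real p"
    by (rule divide_right_mono[OF sum_mono[OF pw]]) simp_all
  also have "\<dots> = T/2" using p by simp
  finally show ?thesis unfolding T_def .
qed


lemma Linf_le:
  assumes "N > 0" "p > 0" "\<And>i j. i \<in> {1..int N} \<Longrightarrow> j \<in> {1..int p} \<Longrightarrow> \<bar>g i j\<bar> \<le> B"
  shows "Linf N p g \<le> B"
proof -
  have e: "{\<bar>g i j\<bar> | i j. i \<in> {1..int N} \<and> j \<in> {1..int p}} = (\<lambda>(i,j). \<bar>g i j\<bar>) ` ({1..int N} \<times> {1..int p})"
    by fastforce
  show ?thesis unfolding Linf_def e using assms by (subst Max_le_iff) auto
qed

lemma Linf_ge: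
  assumes "i \<in> {1..int N}" "j \<in> {1..int p}"
  shows "\<bar>g i j\<bar> \<le> Linf N p g"
proof -
  have e: "{\<bar>g i j\<bar> | i j. i \<in> {1..int N} \<and> j \<in> {1..int p}} = (\<lambda>(i,j). \<bar>g i j\<bar>) ` ({1..int N} \<times> {1..int p})"
    by fastforce
  show ?thesis unfolding Linf_def e using assms by (intro Max_ge) auto
qed

theorem lemma4p3:
  fixes eps c_psi C_psi C'_psi :: real and N p :: nat
    and psi chi :: "int \<Rightarrow> int \<Rightarrow> real"
  assumes "eps > 0" and "N > 0" and "p > 0"
    and "two_scale N p psi"
    and "0 < c_psi"
    and "\<And>i j. c_psi \<le> psi i j" and "\<And>i j. psi i j \<le> C_psi"
    and "cell_solution N p psi chi"
  shows "Linf N p chi \<le> real p / 2 * (C_psi / c_psi)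
    \<and> (Linf N p (DX eps psi) \<le> C'_psi \<longrightarrow>
        Max ((\<lambda>i. \<bar>DX1 eps (psi0 p psi) i\<bar>) ` {1..int N}) \<le> C_psi / c_psi * C'_psi
        \<and> Linf N p (DX eps chi) \<le> real p * (C'_psi / c_psi))"
proof -
  note epos = assms(1) and Npos = assms(2) and ppos = assms(3) and cpos = assms(5)
    and lo = assms(6) and hi = assms(7)
  have chi2: "two_scale N p chi" and mean0: "\<And>i. meanY p chi i = 0"
    and ceq: "\<And>i j. - DY (\<lambda>i' j'. psi i' j' * DY chi i' j') i j = DY psi i j"
    using assms(8) unfolding cell_solution_def by auto
  have psipos: "psi i j > 0" for i j using lo[of i j] cpos by linarith
  have cC: "c_psi \<le> C_psi" using lo[of 0 0] hi[of 0 0] by linarith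
  have Cpos: "C_psi > 0" using cC cpos by linarith
  define S where "S i = (\<Sum>j=1..int p. 1 / psi i j)" for i
  have cardp: "card {1..int p} = p" by simp
  have Slo: "real p / C_psi \<le> S i" for i
  proof -
    have "(\<Sum>j=1..int p. 1 / C_psi) \<le> S i" unfolding S_def
      by (rule sum_mono) (simp add: frac_le psipos hi)
    then show ?thesis by simp
  qed
  have Shi: "S i \<le> real p / c_psi" for i
  proof -
    have "S i \<le> (\<Sum>j=1..int p. 1 / c_psi)" unfolding S_def
      by (rule sum_mono) (simp add: frac_le psipos lo cpos)
    then show ?thesis by simp
  qed
  have Spos: "S i > 0" for i using Slo[of i] ppos Cpos
    by (smt (verit) divide_pos_pos of_nat_0_less_iff)
  have psi0e: "psi0 p psi i = real p / S i" for i
    unfolding psi0_def meanY_def S_def by (simp add: field_simps)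
  have sum0: "(\<Sum>j=1..int p. chi i j) = 0" for i
    using mean0[of i] ppos unfolding meanY_def by simp
  have perj: "chi i (int p + 1) = chi i 1" for i
    using chi2 unfolding two_scale_def by (metis add.commute)
  have sumDY: "(\<Sum>j=1..int p. DY chi i j) = 0" for i
  proof -
    have "{1..int p} = {1..<int p + 1}" by auto
    then show ?thesis unfolding DY_def using telesc[of 1 "int p + 1" "chi i"] perj[of i] by simp
  qed
  have flux: "psi i j * (1 + DY chi i j) = psi0 p psi i" for i j
  proof -
    define F where "F j = psi i j * (1 + DY chi i j)" for j
    have "F (j+1) = F j" for j
      using ceq[of i j] unfolding F_def DY_def by (simp add: algebra_simps)
    then have Fc: "F j = F 0" for j using int_all[of F] by blast
    have "(\<Sum>j=1..int p. DY chi i j) = (\<Sum>j=1..int p. F 0 / psi i j - 1)"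
    proof (rule sum.cong)
      fix j show "DY chi i j = F 0 / psi i j - 1"
        using Fc[of j] psipos[of i j] unfolding F_def by (simp add: field_simps)
    qed simp
    also have "\<dots> = F 0 * S i - real p" unfolding S_def
      by (simp add: sum_subtractf sum_distrib_left)
    finally have "F 0 = real p / S i" using sumDY[of i] Spos[of i]
      by (simp add: field_simps)
    then show ?thesis using Fc[of j] psi0e unfolding F_def by simp
  qed
  have DYf: "DY chi i j = psi0 p psi i / psi i j - 1" for i j
    using flux[of i j] psipos[of i j] by (simp add: field_simps)
  have ps0lo: "c_psi \<le> psi0 p psi i" for i
    unfolding psi0e using Shi[of i] Spos[of i] cpos ppos
    by (simp add: field_simps)
  have ps0hi: "psi0 p psi i \<le> C_psi" for i
    unfolding psi0e using Slo[of i] Spos[of i] Cpos ppos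
    by (simp add: field_simps)
  have CC1: "1 \<le> C_psi / c_psi" using cC cpos by simp
  have partA: "Linf N p chi \<le> real p / 2 * (C_psi / c_psi)"
  proof (rule Linf_le[OF Npos ppos])
    fix i j assume ij: "i \<in> {1..int N}" "j \<in> {1..int p}"
    have "\<bar>chi i j\<bar> \<le> (\<Sum>m=1..int p. \<bar>chi i (m+1) - chi i m\<bar>) / 2"
      by (rule key[OF ppos perj sum0 ij(2)])
    also have "\<dots> \<le> (\<Sum>m=1..int p. C_psi / c_psi) / 2"
    proof (rule divide_right_mono[OF sum_mono], simp_all)
      fix m
      have r1: "psi0 p psi i / psi i m \<le> C_psi / c_psi"
        by (rule frac_le) (use ps0hi lo cpos Cpos in auto)
      have r0: "0 < psi0 p psi i / psi i m" using ps0lo[of i] cpos psipos[of i m] by simp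
      show "\<bar>chi i (m + 1) - chi i m\<bar> \<le> C_psi / c_psi"
        using DYf[of i m] r1 r0 CC1 unfolding DY_def by linarith
    qed
    also have "\<dots> = real p / 2 * (C_psi / c_psi)" by simp
    finally show "\<bar>chi i j\<bar> \<le> real p / 2 * (C_psi / c_psi)" .
  qed
  have partB: "Max ((\<lambda>i. \<bar>DX1 eps (psi0 p psi) i\<bar>) ` {1..int N}) \<le> C_psi / c_psi * C'_psi
        \<and> Linf N p (DX eps chi) \<le> real p * (C'_psi / c_psi)"
    if hyp: "Linf N p (DX eps psi) \<le> C'_psi"
  proof -
    have dpsi: "\<bar>psi (i+1) j - psi i j\<bar> \<le> eps * C'_psi" if "i \<in> {1..int N}" "j \<in> {1..int p}" for i j
    proof -
      have "\<bar>DX eps psi i j\<bar> \<le> C'_psi" using Linf_ge[OF that, of "DX eps psi"] hyp by linarith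
      then have "\<bar>psi (i+1) j - psi i j\<bar> / eps \<le> C'_psi" unfolding DX_def using epos by simp
      then show ?thesis using epos by (simp add: field_simps)
    qed
    define Q where "Q i = (\<Sum>j=1..int p. 1 / (psi i j * psi (i+1) j))" for i
    have Q1: "Q i \<le> S (i+1) / c_psi" for i
    proof -
      have "Q i \<le> (\<Sum>j=1..int p. (1 / c_psi) * (1 / psi (i+1) j))" unfolding Q_def
      proof (rule sum_mono)
        fix j
        have "1 / psi i j \<le> 1 / c_psi" using lo[of i j] cpos by (simp add: frac_le)
        then have "1 / psi i j * (1 / psi (i+1) j) \<le> 1 / c_psi * (1 / psi (i+1) j)"
          by (rule mult_right_mono) (use psipos[of "i+1" j] in simp)
        then show "1 / (psi i j * psi (i + 1) j) \<le> 1 / c_psi * (1 / psi (i + 1) j)" by simp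
      qed
      also have "\<dots> = S (i+1) / c_psi" unfolding S_def by (simp add: sum_divide_distrib ac_simps)
      finally show ?thesis .
    qed
    have Qpos: "0 \<le> Q i" for i unfolding Q_def by (rule sum_nonneg) (simp add: psipos less_imp_le)
    have Cp0: "0 \<le> C'_psi" using dpsi[of 1 1] Npos ppos epos
      by (metis abs_ge_zero order.trans zero_le_mult_iff atLeastAtMost_iff int_one_le_iff_zero_less of_nat_0_less_iff order_refl less_le_not_le)
    have SD: "\<bar>S i - S (i+1)\<bar> \<le> eps * C'_psi * Q i" if i: "i \<in> {1..int N}" for i
    proof -
      have "S i - S (i+1) = (\<Sum>j=1..int p. (psi (i+1) j - psi i j) * (1 / (psi i j * psi (i+1) j)))"
        unfolding S_def sum_subtractf[symmetric]
        apply (rule sum.cong[OF refl]) subgoal for x using psipos[of i x] psipos[of "i+1" x] by (simp add: field_simps) done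
      also have "\<bar>\<dots>\<bar> \<le> (\<Sum>j=1..int p. \<bar>(psi (i+1) j - psi i j) * (1 / (psi i j * psi (i+1) j))\<bar>)"
        by (rule sum_abs)
      also have "\<dots> \<le> (\<Sum>j=1..int p. eps * C'_psi * (1 / (psi i j * psi (i+1) j)))"
      proof (rule sum_mono)
        fix j assume j: "j \<in> {1..int p}"
        have "0 < psi i j * psi (i+1) j" using psipos by simp
        then show "\<bar>(psi (i+1) j - psi i j) * (1 / (psi i j * psi (i+1) j))\<bar> \<le> eps * C'_psi * (1 / (psi i j * psi (i+1) j))"
          using dpsi[OF i j] by (simp only: abs_mult abs_of_pos[OF positive_imp_inverse_positive[OF \<open>0 < psi i j * psi (i+1) j\<close>, unfolded inverse_eq_divide]]) (rule mult_right_mono[OF dpsi[OF i j]], use \<open>0 < psi i j * psi (i+1) j\<close> in simp)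
      qed
      also have "\<dots> = eps * C'_psi * Q i" unfolding Q_def by (simp add: sum_distrib_left)
      finally show ?thesis .
    qed
    have P0D: "\<bar>psi0 p psi (i+1) - psi0 p psi i\<bar> \<le> real p * eps * C'_psi / (c_psi * S i)"
      if i: "i \<in> {1..int N}" for i
    proof -
      have Sp: "S i > 0" "S (i+1) > 0" using Spos by auto
      have "psi0 p psi (i+1) - psi0 p psi i = real p * (S i - S (i+1)) / (S i * S (i+1))"
        unfolding psi0e using Sp by (simp add: field_simps)
      then have "\<bar>psi0 p psi (i+1) - psi0 p psi i\<bar> = real p * \<bar>S i - S (i+1)\<bar> / (S i * S (i+1))"
        using Sp by (simp add: abs_mult)
      also have "\<dots> \<le> real p * (eps * C'_psi * (S (i+1) / c_psi)) / (S i * S (i+1))"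
      proof (rule divide_right_mono[OF mult_left_mono])
        show "\<bar>S i - S (i + 1)\<bar> \<le> eps * C'_psi * (S (i + 1) / c_psi)"
          using SD[OF i] Q1[of i] mult_left_mono[OF Q1[of i], of "eps * C'_psi"] epos Cp0 by simp
      qed (use Sp in auto)
      also have "\<dots> = real p * eps * C'_psi / (c_psi * S i)" using Sp cpos by (simp add: field_simps)
      finally show ?thesis .
    qed
    have b1: "\<bar>DX1 eps (psi0 p psi) i\<bar> \<le> C_psi / c_psi * C'_psi" if i: "i \<in> {1..int N}" for i
    proof -
      have "real p / S i \<le> C_psi" using ps0hi[of i] psi0e by simp
      then have "real p * eps * C'_psi / (c_psi * S i) = (real p / S i) * (eps * C'_psi / c_psi)" by (simp add: mult.commute mult.assoc)
      also have "\<dots> \<le> C_psi * (eps * C'_psi / c_psi)"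
        by (rule mult_right_mono) (use \<open>real p / S i \<le> C_psi\<close> epos Cp0 cpos in auto)
      finally have "\<bar>psi0 p psi (i+1) - psi0 p psi i\<bar> \<le> C_psi * (eps * C'_psi / c_psi)"
        using P0D[OF i] by linarith
      then have "\<bar>psi0 p psi (i+1) - psi0 p psi i\<bar> / eps \<le> C_psi / c_psi * C'_psi"
        using epos by (simp add: field_simps)
      then show ?thesis unfolding DX1_def using epos by simp
    qed
    have B1: "Max ((\<lambda>i. \<bar>DX1 eps (psi0 p psi) i\<bar>) ` {1..int N}) \<le> C_psi / c_psi * C'_psi"
      using b1 Npos by (subst Max_le_iff) auto
    have B2: "Linf N p (DX eps chi) \<le> real p * (C'_psi / c_psi)"
    proof (rule Linf_le[OF Npos ppos])
      fix i j assume ij: "i \<in> {1..int N}" "j \<in> {1..int p}"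
      define v where "v j = chi (i+1) j - chi i j" for j
      have vper: "v (int p + 1) = v 1" unfolding v_def using perj by simp
      have vs: "(\<Sum>j=1..int p. v j) = 0" unfolding v_def using sum0 by (simp add: sum_subtractf)
      have Sp: "S i > 0" "S (i+1) > 0" using Spos by auto
      have "\<bar>v j\<bar> \<le> (\<Sum>m=1..int p. \<bar>v (m+1) - v m\<bar>) / 2"
        by (rule key[OF ppos vper vs ij(2)])
      also have "(\<Sum>m=1..int p. \<bar>v (m+1) - v m\<bar>) \<le>
         (\<Sum>m=1..int p. psi0 p psi (i+1) * (eps * C'_psi * (1 / (psi i m * psi (i+1) m)))
                    + \<bar>psi0 p psi (i+1) - psi0 p psi i\<bar> * (1 / psi i m))"
      proof (rule sum_mono)
        fix m assume m: "m \<in> {1..int p}"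
        have a0: "v (m+1) - v m = (psi0 p psi (i+1) / psi (i+1) m - 1) - (psi0 p psi i / psi i m - 1)"
          using DYf[of "i+1" m] DYf[of i m] unfolding v_def DY_def by simp
        have alg: "\<And>A B P Q :: real. A > 0 \<Longrightarrow> B > 0 \<Longrightarrow> (P / B - 1) - (Q / A - 1) = P * ((A - B) * (1 / (A * B))) + (P - Q) * (1 / A)"
          by (simp add: field_simps)
        have a: "v (m+1) - v m = psi0 p psi (i+1) * ((psi i m - psi (i+1) m) * (1 / (psi i m * psi (i+1) m)))
             + (psi0 p psi (i+1) - psi0 p psi i) * (1 / psi i m)"
          unfolding a0 by (rule alg[OF psipos psipos])
        have pp: "0 < psi i m * psi (i+1) m" using psipos by simp
        have t1: "\<bar>psi0 p psi (i+1) * ((psi i m - psi (i+1) m) * (1 / (psi i m * psi (i+1) m)))\<bar>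
            \<le> psi0 p psi (i+1) * (eps * C'_psi * (1 / (psi i m * psi (i+1) m)))"
        proof -
          have "\<bar>(psi i m - psi (i+1) m) * (1 / (psi i m * psi (i+1) m))\<bar> \<le> eps * C'_psi * (1 / (psi i m * psi (i+1) m))"
            using dpsi[OF ij(1) m] pp by (simp only: abs_mult abs_of_pos[OF positive_imp_inverse_positive[OF pp, unfolded inverse_eq_divide]]) (rule mult_right_mono, simp add: abs_minus_commute, use pp in simp)
          then show ?thesis using ps0lo[of "i+1"] cpos by (simp only: abs_mult abs_of_pos[of "psi0 p psi (i+1)"]) (rule mult_left_mono, auto)
        qed
        have t2: "\<bar>(psi0 p psi (i+1) - psi0 p psi i) * (1 / psi i m)\<bar> = \<bar>psi0 p psi (i+1) - psi0 p psi i\<bar> * (1 / psi i m)"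
          using psipos[of i m] by (simp add: abs_mult)
        show "\<bar>v (m+1) - v m\<bar> \<le> psi0 p psi (i+1) * (eps * C'_psi * (1 / (psi i m * psi (i+1) m)))
                    + \<bar>psi0 p psi (i+1) - psi0 p psi i\<bar> * (1 / psi i m)"
          unfolding a by (rule order.trans[OF abs_triangle_ineq]) (use t1 t2 in linarith)
      qed
      also have "\<dots> = psi0 p psi (i+1) * (eps * C'_psi * Q i) + \<bar>psi0 p psi (i+1) - psi0 p psi i\<bar> * S i"
        unfolding Q_def S_def by (simp add: sum.distrib sum_distrib_left)
      also have "\<dots> \<le> real p * eps * C'_psi / c_psi + real p * eps * C'_psi / c_psi"
      proof (rule add_mono)
        have "psi0 p psi (i+1) * (eps * C'_psi * Q i) \<le> psi0 p psi (i+1) * (eps * C'_psi * (S (i+1) / c_psi))"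
          using Q1[of i] epos Cp0 ps0lo[of "i+1"] cpos
          by (intro mult_left_mono) (auto intro: mult_left_mono)
        also have "\<dots> = real p * eps * C'_psi / c_psi" using psi0e[of "i+1"] Sp by (simp add: field_simps)
        finally show "psi0 p psi (i+1) * (eps * C'_psi * Q i) \<le> real p * eps * C'_psi / c_psi" .
        have "\<bar>psi0 p psi (i+1) - psi0 p psi i\<bar> * S i \<le> real p * eps * C'_psi / (c_psi * S i) * S i"
          by (rule mult_right_mono[OF P0D[OF ij(1)]]) (use Sp in simp)
        also have "\<dots> = real p * eps * C'_psi / c_psi" using Sp by simp
        finally show "\<bar>psi0 p psi (i+1) - psi0 p psi i\<bar> * S i \<le> real p * eps * C'_psi / c_psi" .
      qed
      finally have "\<bar>v j\<bar> \<le> real p * eps * C'_psi / c_psi" by (simp add: ac_simps)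
      then have "\<bar>v j\<bar> / eps \<le> real p * (C'_psi / c_psi)" using epos by (simp add: field_simps)
      then show "\<bar>DX eps chi i j\<bar> \<le> real p * (C'_psi / c_psi)"
        unfolding DX_def v_def using epos by simp
    qed
    show ?thesis using B1 B2 by simp
  qed
  show ?thesis using partA partB by blast
qed

end
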